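(* Let $R$ be an exchange ring and $A\in GL_n(R)$ with $n\ge 2$. Then $A$ can be transformed by a finite sequence of elementary row and column operations to a matrix whose $1,1$ entry $d$ is a (von Neumann) regular element with $dR=(1-p)R$ and $Rd=R(1-q)$ for some idempotents $p,q\in R$ such that $RpR=RqR=R$.
   Context: All rings are unital. A ring $R$ is an exchange ring if for every $a\in R$ there is an idempotent $e\in aR$ with $1-e\in(1-a)R$ (equivalently, $R_R$ has the finite exchange property). An element $x\in R$ is regular if $xyx=x$ for some $y\in R$. An elementary row (resp. column) operation adds a left (resp. right) multiple by an element of $R$ of one row (resp. column) to a different row (resp. column). *)

theory Defs
  imports "Jordan_Normal_Form.Matrix"
begin

definition exchange_ring :: "'a::ring_1 itself \<Rightarrow> bool" where
  "exchange_ring _ \<longleftrightarrow>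
     (\<forall>a::'a. \<exists>e. e * e = e \<and> (\<exists>r. e = a * r) \<and> (\<exists>s. 1 - e = (1 - a) * s))"

definition regular_elem :: "'a::ring_1 \<Rightarrow> bool" where
  "regular_elem x \<longleftrightarrow> (\<exists>y. x * y * x = x)"

definition two_sided_ideal :: "'a::ring_1 \<Rightarrow> 'a set" where
  "two_sided_ideal p = {x. \<exists>(m::nat) rs ss. x = (\<Sum>i<m. rs i * p * ss i)}"

definition row_op :: "'a::ring_1 \<Rightarrow> nat \<Rightarrow> nat \<Rightarrow> 'a mat \<Rightarrow> 'a mat" where
  "row_op c i j A = mat (dim_row A) (dim_col A)
     (\<lambda>(k,l). if k = i then A $$ (i,l) + c * A $$ (j,l) else A $$ (k,l))"

definition col_op :: "'a::ring_1 \<Rightarrow> nat \<Rightarrow> nat \<Rightarrow> 'a mat \<Rightarrow> 'a mat" where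
  "col_op c i j A = mat (dim_row A) (dim_col A)
     (\<lambda>(k,l). if l = i then A $$ (k,i) + A $$ (k,j) * c else A $$ (k,l))"

definition elem_step :: "nat \<Rightarrow> 'a::ring_1 mat \<Rightarrow> 'a mat \<Rightarrow> bool" where
  "elem_step n A B \<longleftrightarrow> (\<exists>c i j. i < n \<and> j < n \<and> i \<noteq> j \<and>
       (B = row_op c i j A \<or> B = col_op c i j A))"

end

theory Submission
  imports Defs
begin

definition is_ideal :: "'a::ring_1 set \<Rightarrow> bool" where
  "is_ideal I \<longleftrightarrow> 0 \<in> I \<and> (\<forall>x\<in>I. \<forall>y\<in>I. x + y \<in> I) \<and> (\<forall>x\<in>I. \<forall>a. a * x \<in> I \<and> x * a \<in> I)"

lemma ideal_add: "is_ideal I \<Longrightarrow> x \<in> I \<Longrightarrow> y \<in> I \<Longrightarrow> x + y \<in> I"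
  unfolding is_ideal_def by blast
lemma ideal_lmult: "is_ideal I \<Longrightarrow> x \<in> I \<Longrightarrow> a * x \<in> I"
  unfolding is_ideal_def by blast
lemma ideal_rmult: "is_ideal I \<Longrightarrow> x \<in> I \<Longrightarrow> x * a \<in> I"
  unfolding is_ideal_def by blast
lemma ideal_zero: "is_ideal I \<Longrightarrow> 0 \<in> I"
  unfolding is_ideal_def by blast
lemma ideal_neg: "is_ideal I \<Longrightarrow> x \<in> I \<Longrightarrow> - x \<in> I"
  using ideal_lmult[of I x "-1"] by simp
lemma ideal_diff: "is_ideal I \<Longrightarrow> x \<in> I \<Longrightarrow> y \<in> I \<Longrightarrow> x - y \<in> I"
  using ideal_add[of I x "-y"] ideal_neg[of I y] by simp
lemma ideal_sum: "is_ideal I \<Longrightarrow> (\<And>i. i \<in> A \<Longrightarrow> f i \<in> I) \<Longrightarrow> sum f A \<in> I"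
proof (induction A rule: infinite_finite_induct)
  case (infinite A) then show ?case by (simp add: ideal_zero)
next
  case empty then show ?case by (simp add: ideal_zero)
next
  case (insert x F) then show ?case by (simp add: ideal_add)
qed
lemma ideal_UNIV: "is_ideal I \<Longrightarrow> 1 \<in> I \<Longrightarrow> I = UNIV"
  using ideal_rmult[of I 1] by auto

lemma tsi_mult:
  assumes x: "x \<in> two_sided_ideal (p::'a::ring_1)"
  shows "a * x \<in> two_sided_ideal p \<and> x * a \<in> two_sided_ideal p"
proof -
  from x obtain m :: nat and r s where xm: "x = (\<Sum>i<m. r i * p * s i)" unfolding two_sided_ideal_def by blast
  have "a * x \<in> two_sided_ideal p" unfolding two_sided_ideal_def mem_Collect_eq
    by (rule exI[of _ m], rule exI[of _ "\<lambda>i. a * r i"], rule exI[of _ s])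
       (simp add: xm sum_distrib_left mult.assoc)
  moreover have "x * a \<in> two_sided_ideal p" unfolding two_sided_ideal_def mem_Collect_eq
    by (rule exI[of _ m], rule exI[of _ r], rule exI[of _ "\<lambda>i. s i * a"])
       (simp add: xm sum_distrib_right mult.assoc)
  ultimately show ?thesis by blast
qed

lemma tsi_add:
  assumes x: "x \<in> two_sided_ideal (p::'a::ring_1)" and y: "y \<in> two_sided_ideal p"
  shows "x + y \<in> two_sided_ideal p"
proof -
  from x obtain m :: nat and r s where xm: "x = (\<Sum>i<m. r i * p * s i)" unfolding two_sided_ideal_def by blast
  from y obtain m2 :: nat and r2 s2 where ym: "y = (\<Sum>i<m2. r2 i * p * s2 i)" unfolding two_sided_ideal_def by blast
  define R where "R = (\<lambda>i. if i < m then r i else r2 (i - m))"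
  define S where "S = (\<lambda>i. if i < m then s i else s2 (i - m))"
  have "(\<Sum>i<m + m2. R i * p * S i) = (\<Sum>i<m. R i * p * S i) + (\<Sum>i<m2. R (m + i) * p * S (m + i))"
    by (induction m2) (simp_all add: add_ac)
  also have "\<dots> = x + y" unfolding xm ym R_def S_def by simp
  finally show "x + y \<in> two_sided_ideal p" unfolding two_sided_ideal_def by (intro CollectI exI) (rule sym)
qed

lemma tsi_ideal: "is_ideal (two_sided_ideal (p::'a::ring_1))"
  unfolding is_ideal_def
proof (intro conjI ballI allI)
  show "0 \<in> two_sided_ideal p" unfolding two_sided_ideal_def
    by (rule CollectI, rule exI[of _ 0]) simp
qed (auto simp: tsi_add tsi_mult)

lemma tsi_self: "(p::'a::ring_1) \<in> two_sided_ideal p"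
  unfolding two_sided_ideal_def
  by (rule CollectI, rule exI[of _ 1], rule exI[of _ "\<lambda>_. 1"], rule exI[of _ "\<lambda>_. 1"]) simp

lemma exch:
  assumes "exchange_ring TYPE('a::ring_1)"
  shows "\<exists>e r s. e * e = e \<and> e = (a::'a) * r \<and> 1 - e = (1 - a) * s"
  using assms unfolding exchange_ring_def by blast

lemma split_step:
  fixes g a0 w :: "'a::ring_1"
  assumes ex: "exchange_ring TYPE('a)" and gg: "g * g = g" and aw: "a0 + w = 1"
  shows "\<exists>fk g'. fk * fk = fk \<and> g' * g' = g' \<and> fk * g' = 0 \<and> g' * fk = 0 \<and> fk + g' = g
     \<and> g * fk = fk \<and> fk * g = fk \<and> g * g' = g' \<and> g' * g = g'
     \<and> (\<exists>t. fk = g * a0 * t) \<and> (\<exists>t. g' = g * w * t)"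
proof -
  have ggx: "\<And>x. g * (g * x) = g * x" by (simp add: mult.assoc[symmetric] gg)
  define a where "a = g * a0 * g + (1 - g)"
  have oma: "1 - a = g * w * g"
  proof -
    have 1: "g * (a0 + w) * g = g" using aw gg by simp
    have 2: "g * a0 * g + g * w * g = g" using 1 by (simp add: algebra_simps)
    have "1 - a = g - g * a0 * g" unfolding a_def by (simp add: algebra_simps)
    also have "\<dots> = (g * a0 * g + g * w * g) - g * a0 * g" by (simp only: 2)
    finally show ?thesis by simp
  qed
  obtain e r s where ee: "e * e = e" and er: "e = a * r" and es: "1 - e = (1 - a) * s"
    using exch[OF ex, of a] by blast
  define h where "h = 1 - e"
  have hs: "h = g * w * g * s" using es oma unfolding h_def by simp
  have gh: "g * h = h" unfolding hs by (simp add: mult.assoc[symmetric] gg)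
  have eh: "e * h = 0" unfolding h_def by (simp add: algebra_simps ee)
  have hh: "h * h = h" unfolding h_def by (simp add: algebra_simps ee)
  have ge: "g * e = g - h"
  proof -
    have "g * e = g * (1 - h)" unfolding h_def by simp
    also have "\<dots> = g - g * h" by (simp add: algebra_simps)
    finally show ?thesis using gh by simp
  qed
  have he: "h * e = 0" unfolding h_def by (simp add: algebra_simps ee)
  define fk where "fk = e * g"
  define g' where "g' = h * g"
  have fkeq: "fk = g - h * g" unfolding fk_def h_def by (simp add: algebra_simps)
  have gfk: "g * fk = fk"
  proof -
    have "g * fk = g * e * g" unfolding fk_def by (simp add: mult.assoc)
    also have "\<dots> = (g - h) * g" by (simp add: ge)
    also have "\<dots> = fk" unfolding fkeq by (simp add: algebra_simps gg)
    finally show ?thesis .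
  qed
  have fkg: "fk * g = fk"
  proof -
    have "fk * g = e * (g * g)" unfolding fk_def by (simp add: mult.assoc)
    then show ?thesis using gg unfolding fk_def by simp
  qed
  have gg': "g * g' = g'" unfolding g'_def by (simp add: mult.assoc[symmetric] gh)
  have g'g: "g' * g = g'"
  proof -
    have "g' * g = h * (g * g)" unfolding g'_def by (simp add: mult.assoc)
    then show ?thesis using gg unfolding g'_def by simp
  qed
  have fkfk: "fk * fk = fk"
  proof -
    have "fk * fk = e * (g * e) * g" unfolding fk_def by (simp add: mult.assoc)
    also have "\<dots> = e * g - e * h * g" by (simp add: ge algebra_simps gg)
    also have "\<dots> = fk" unfolding fk_def by (simp add: eh)
    finally show ?thesis .
  qed
  have g'g'': "g' * g' = g'"
  proof -
    have "g' * g' = h * (g * h) * g" unfolding g'_def by (simp add: mult.assoc)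
    also have "\<dots> = g'" unfolding g'_def by (simp add: gh hh)
    finally show ?thesis .
  qed
  have fkg': "fk * g' = 0"
  proof -
    have "fk * g' = e * (g * h) * g" unfolding fk_def g'_def by (simp add: mult.assoc)
    also have "\<dots> = 0" by (simp add: gh eh mult.assoc[symmetric])
    finally show ?thesis .
  qed
  have g'fk: "g' * fk = 0"
  proof -
    have "g' * fk = h * (g * e) * g" unfolding fk_def g'_def by (simp add: mult.assoc)
    also have "\<dots> = h * g - h * h * g" by (simp add: ge algebra_simps gg)
    also have "\<dots> = 0" by (simp add: hh)
    finally show ?thesis .
  qed
  have sum: "fk + g' = g" unfolding fk_def g'_def h_def by (simp add: algebra_simps)
  have t1: "fk = g * a0 * (g * r * g)"
  proof -
    have "fk = g * fk" using gfk by simp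
    also have "\<dots> = g * e * g" unfolding fk_def by (simp add: mult.assoc)
    also have "\<dots> = g * a * r * g" by (simp add: er mult.assoc)
    also have "g * a = g * a0 * g" unfolding a_def by (simp add: algebra_simps gg ggx)
    finally show ?thesis by (simp add: mult.assoc)
  qed
  have t2: "g' = g * w * (g * s * g)" unfolding g'_def hs by (simp add: mult.assoc)
  show ?thesis
    apply (rule exI[of _ fk], rule exI[of _ g'])
    using fkfk g'g'' fkg' g'fk sum gfk fkg gg' g'g t1 t2 by blast
qed

definition inv_n :: "nat \<Rightarrow> 'a::ring_1 mat \<Rightarrow> bool" where
  "inv_n n A \<longleftrightarrow> A \<in> carrier_mat n n \<and> (\<exists>X\<in>carrier_mat n n. A * X = 1\<^sub>m n \<and> X * A = 1\<^sub>m n)"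

lemma invertible_inv_n:
  assumes "A \<in> carrier_mat n n" "invertible_mat (A::'a::ring_1 mat)"
  shows "inv_n n A"
proof -
  from assms(2) obtain B where AB: "A * B = 1\<^sub>m (dim_row A)" and BA: "B * A = 1\<^sub>m (dim_row B)"
    unfolding invertible_mat_def inverts_mat_def by blast
  have dA: "dim_row A = n" "dim_col A = n" using assms(1) by auto
  have "dim_col B = n" using arg_cong[OF AB, of dim_col] dA by simp
  moreover have "dim_row B = n" using arg_cong[OF BA, of dim_col] dA by simp
  ultimately have "B \<in> carrier_mat n n" by auto
  then show ?thesis unfolding inv_n_def using assms(1) AB BA dA by auto
qed

lemma mult_entry:
  assumes "A \<in> carrier_mat n n" "X \<in> carrier_mat n n" "r < n" "l < n"
  shows "(A * X) $$ (r, l) = (\<Sum>j<n. A $$ (r, j) * X $$ (j, l))"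
  using assms by (simp add: scalar_prod_def atLeast0LessThan)

lemma col_op_dim[simp]: "dim_row (col_op c i j A) = dim_row A" "dim_col (col_op c i j A) = dim_col A"
  unfolding col_op_def by auto

lemma col_op_index:
  "k < dim_row A \<Longrightarrow> l < dim_col A \<Longrightarrow>
   col_op c i j A $$ (k, l) = (if l = i then A $$ (k, i) + A $$ (k, j) * c else A $$ (k, l))"
  unfolding col_op_def by simp

lemma col_op_carrier: "A \<in> carrier_mat n m \<Longrightarrow> col_op c i j A \<in> carrier_mat n m"
  by auto

lemma sum_delta_right:
  fixes f :: "nat \<Rightarrow> 'a::ring_1"
  assumes "i < n"
  shows "(\<Sum>m<n. f m * (if m = i then 1 else 0)) = f i"
proof -
  have "(\<Sum>m<n. f m * (if m = i then 1 else 0)) = (\<Sum>m<n. if m = i then f m else 0)"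
    by (rule sum.cong) auto
  also have "\<dots> = f i" using assms by (simp add: sum.delta)
  finally show ?thesis .
qed

lemma col_op_mult:
  fixes A :: "'a::ring_1 mat"
  assumes A: "A \<in> carrier_mat n n" and i: "i < n" and j: "j < n"
  shows "col_op c i j A = A * col_op c i j (1\<^sub>m n)"
proof (rule eq_matI)
  fix k l assume k: "k < dim_row (A * col_op c i j (1\<^sub>m n))" and l: "l < dim_col (A * col_op c i j (1\<^sub>m n))"
  then have kn: "k < n" and ln: "l < n" using A by auto
  have E: "col_op c i j (1\<^sub>m n) \<in> carrier_mat n n" by auto
  have "(A * col_op c i j (1\<^sub>m n)) $$ (k, l) = (\<Sum>m<n. A $$ (k, m) * col_op c i j (1\<^sub>m n) $$ (m, l))"
    by (rule mult_entry[OF A E kn ln])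
  also have "\<dots> = (if l = i then A $$ (k, i) + A $$ (k, j) * c else A $$ (k, l))"
  proof (cases "l = i")
    case True
    have "(\<Sum>m<n. A $$ (k, m) * col_op c i j (1\<^sub>m n) $$ (m, l))
        = (\<Sum>m<n. A $$ (k, m) * (if m = i then 1 else 0) + (A $$ (k, m) * (if m = j then 1 else 0)) * c)"
      using True i j by (intro sum.cong) (auto simp: col_op_index algebra_simps)
    also have "\<dots> = A $$ (k, i) + A $$ (k, j) * c"
      by (simp add: sum.distrib sum_distrib_right[symmetric] sum_delta_right i j)
    finally show ?thesis using True by simp
  next
    case False
    have "(\<Sum>m<n. A $$ (k, m) * col_op c i j (1\<^sub>m n) $$ (m, l))
        = (\<Sum>m<n. A $$ (k, m) * (if m = l then 1 else 0))"
      using False ln by (intro sum.cong) (auto simp: col_op_index)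
    also have "\<dots> = A $$ (k, l)" by (simp add: sum_delta_right ln)
    finally show ?thesis using False by simp
  qed
  also have "\<dots> = col_op c i j A $$ (k, l)" using A kn ln by (simp add: col_op_index)
  finally show "col_op c i j A $$ (k, l) = (A * col_op c i j (1\<^sub>m n)) $$ (k, l)" by simp
next
  show "dim_row (col_op c i j A) = dim_row (A * col_op c i j (1\<^sub>m n))" using A by simp
  show "dim_col (col_op c i j A) = dim_col (A * col_op c i j (1\<^sub>m n))" using A by simp
qed

lemma col_op_inv_one:
  assumes i: "i < n" and j: "j < n" and ij: "i \<noteq> j"
  shows "col_op (-c) i j (col_op c i j (1\<^sub>m n)) = (1\<^sub>m n :: 'a::ring_1 mat)"
  by (rule eq_matI) (use i j ij in \<open>auto simp: col_op_index\<close>)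

lemma inv_n_col_op:
  fixes A :: "'a::ring_1 mat"
  assumes inv: "inv_n n A" and i: "i < n" and j: "j < n" and ij: "i \<noteq> j"
  shows "inv_n n (col_op c i j A)"
proof -
  from inv obtain X where A: "A \<in> carrier_mat n n" and X: "X \<in> carrier_mat n n"
    and AX: "A * X = 1\<^sub>m n" and XA: "X * A = 1\<^sub>m n" unfolding inv_n_def by blast
  define E where "E = col_op c i j (1\<^sub>m n :: 'a mat)"
  define E' where "E' = col_op (-c) i j (1\<^sub>m n :: 'a mat)"
  have Ec: "E \<in> carrier_mat n n" "E' \<in> carrier_mat n n" unfolding E_def E'_def by auto
  have EE': "E * E' = 1\<^sub>m n"
    using col_op_mult[OF Ec(1) i j, of "-c"] col_op_inv_one[OF i j ij, of c] unfolding E_def E'_def by simp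
  have E'E: "E' * E = 1\<^sub>m n"
    using col_op_mult[OF Ec(2) i j, of "c"] col_op_inv_one[OF i j ij, of "-c"] unfolding E_def E'_def by simp
  have A': "col_op c i j A = A * E" unfolding E_def by (rule col_op_mult[OF A i j])
  have c1: "(A * E) * (E' * X) = 1\<^sub>m n"
  proof -
    have "(A * E) * (E' * X) = A * ((E * E') * X)"
      using A X Ec by (simp add: assoc_mult_mat[of _ n n _ n _ n])
    also have "\<dots> = 1\<^sub>m n" using EE' AX X by simp
    finally show ?thesis .
  qed
  have c2: "(E' * X) * (A * E) = 1\<^sub>m n"
  proof -
    have "(E' * X) * (A * E) = E' * ((X * A) * E)"
      using A X Ec by (simp add: assoc_mult_mat[of _ n n _ n _ n])
    also have "\<dots> = 1\<^sub>m n" using E'E XA Ec by simp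
    finally show ?thesis .
  qed
  have "E' * X \<in> carrier_mat n n" using Ec X by simp
  then show ?thesis unfolding inv_n_def A' using A Ec c1 c2 by (intro conjI bexI[of _ "E' * X"]) auto
qed

lemma elem_step_col: "i < n \<Longrightarrow> j < n \<Longrightarrow> i \<noteq> j \<Longrightarrow> elem_step n A (col_op c i j A)"
  unfolding elem_step_def by blast

abbreviation reach :: "nat \<Rightarrow> 'a::ring_1 mat \<Rightarrow> 'a mat \<Rightarrow> bool" where
  "reach n \<equiv> (elem_step n)\<^sup>*\<^sup>*"

lemma addcols_into_aux:
  fixes A :: "'a::ring_1 mat"
  assumes inv: "inv_n n A" and k: "k < n" and ck: "c k = 0"
  shows "m \<le> n \<Longrightarrow> \<exists>B. reach n A B \<and> inv_n n B \<and>
    (\<forall>r<n. \<forall>l<n. B $$ (r, l) = (if l = k then A $$ (r, k) + (\<Sum>j<m. A $$ (r, j) * c j) else A $$ (r, l)))"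
proof (induction m)
  case 0
  show ?case by (rule exI[of _ A]) (use inv in auto)
next
  case (Suc m)
  then obtain B where r: "reach n A B" and iB: "inv_n n B" and
    B: "\<forall>r<n. \<forall>l<n. B $$ (r, l) = (if l = k then A $$ (r, k) + (\<Sum>j<m. A $$ (r, j) * c j) else A $$ (r, l))"
    by auto
  have mn: "m < n" using Suc.prems by simp
  show ?case
  proof (cases "m = k")
    case True
    show ?thesis by (rule exI[of _ B]) (use r iB B True ck in auto)
  next
    case False
    define B' where "B' = col_op (c m) k m B"
    have Bc: "B \<in> carrier_mat n n" using iB unfolding inv_n_def by blast
    have "reach n A B'" unfolding B'_def
      using r elem_step_col[OF k mn, of B "c m"] False by (simp add: rtranclp.rtrancl_into_rtrancl)
    moreover have "inv_n n B'" unfolding B'_def by (rule inv_n_col_op[OF iB k mn]) (use False in auto)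
    moreover have "\<forall>r<n. \<forall>l<n. B' $$ (r, l) = (if l = k then A $$ (r, k) + (\<Sum>j<Suc m. A $$ (r, j) * c j) else A $$ (r, l))"
      using B Bc False mn unfolding B'_def by (auto simp: col_op_index add.assoc)
    ultimately show ?thesis by blast
  qed
qed

lemma addcols_into:
  fixes A :: "'a::ring_1 mat"
  assumes inv: "inv_n n A" and k: "k < n" and ck: "c k = 0"
  shows "\<exists>B. reach n A B \<and> inv_n n B \<and>
    (\<forall>r<n. \<forall>l<n. B $$ (r, l) = (if l = k then A $$ (r, k) + (\<Sum>j<n. A $$ (r, j) * c j) else A $$ (r, l)))"
  using addcols_into_aux[of n A k c n] assms by simp

lemma addcol_from_aux:
  fixes A :: "'a::ring_1 mat"
  assumes inv: "inv_n n A" and s: "s < n"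
  shows "m \<le> n \<Longrightarrow> \<exists>B. reach n A B \<and> inv_n n B \<and>
    (\<forall>r<n. \<forall>l<n. B $$ (r, l) = (if l \<noteq> s \<and> l < m then A $$ (r, l) + A $$ (r, s) * c l else A $$ (r, l)))"
proof (induction m)
  case 0
  show ?case by (rule exI[of _ A]) (use inv in auto)
next
  case (Suc m)
  then obtain B where r: "reach n A B" and iB: "inv_n n B" and
    B: "\<forall>r<n. \<forall>l<n. B $$ (r, l) = (if l \<noteq> s \<and> l < m then A $$ (r, l) + A $$ (r, s) * c l else A $$ (r, l))"
    by auto
  have mn: "m < n" using Suc.prems by simp
  show ?case
  proof (cases "m = s")
    case True
    show ?thesis by (rule exI[of _ B]) (use r iB B True in \<open>auto simp: less_Suc_eq\<close>)
  next
    case False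
    define B' where "B' = col_op (c m) m s B"
    have Bc: "B \<in> carrier_mat n n" using iB unfolding inv_n_def by blast
    have "reach n A B'" unfolding B'_def
      using r elem_step_col[OF mn s, of B "c m"] False by (simp add: rtranclp.rtrancl_into_rtrancl)
    moreover have "inv_n n B'" unfolding B'_def by (rule inv_n_col_op[OF iB mn s]) (use False in auto)
    moreover have "\<forall>r<n. \<forall>l<n. B' $$ (r, l) = (if l \<noteq> s \<and> l < Suc m then A $$ (r, l) + A $$ (r, s) * c l else A $$ (r, l))"
      using B Bc False mn s unfolding B'_def by (auto simp: col_op_index less_Suc_eq)
    ultimately show ?thesis by blast
  qed
qed

lemma addcol_from:
  fixes A :: "'a::ring_1 mat"
  assumes inv: "inv_n n A" and s: "s < n"
  shows "\<exists>B. reach n A B \<and> inv_n n B \<and>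
    (\<forall>r<n. \<forall>l<n. B $$ (r, l) = (if l \<noteq> s then A $$ (r, l) + A $$ (r, s) * c l else A $$ (r, l)))"
  using addcol_from_aux[OF assms, of n c] by auto

definition inS :: "(nat \<Rightarrow> 'a::ring_1) \<Rightarrow> nat \<Rightarrow> nat \<Rightarrow> 'a \<Rightarrow> bool" where
  "inS u n k v \<longleftrightarrow> (\<exists>c. c k = 0 \<and> v = (\<Sum>j<n. u j * c j))"

lemma inS_add: "inS u n k v \<Longrightarrow> inS u n k w \<Longrightarrow> inS u n k (v + w)"
  unfolding inS_def
proof (elim exE conjE)
  fix c d assume "c k = 0" "v = (\<Sum>j<n. u j * c j)" "d k = 0" "w = (\<Sum>j<n. u j * d j)"
  then show "\<exists>e. e k = 0 \<and> v + w = (\<Sum>j<n. u j * e j)"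
    by (intro exI[of _ "\<lambda>j. c j + d j"]) (simp add: sum.distrib distrib_left)
qed

lemma inS_rmult: "inS u n k v \<Longrightarrow> inS u n k (v * a)"
  unfolding inS_def
proof (elim exE conjE)
  fix c assume "c k = 0" "v = (\<Sum>j<n. u j * c j)"
  then show "\<exists>e. e k = 0 \<and> v * a = (\<Sum>j<n. u j * e j)"
    by (intro exI[of _ "\<lambda>j. c j * a"]) (simp add: sum_distrib_right mult.assoc)
qed

lemma inS_zero: "inS u n k 0"
  unfolding inS_def by (intro exI[of _ "\<lambda>_. 0"]) simp

lemma inS_neg: "inS u n k v \<Longrightarrow> inS u n k (- v)"
  using inS_rmult[of u n k v "-1"] by simp

lemma inS_diff: "inS u n k v \<Longrightarrow> inS u n k w \<Longrightarrow> inS u n k (v - w)"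
  using inS_add[of u n k v "-w"] inS_neg[of u n k w] by simp

lemma inS_gen: "j < n \<Longrightarrow> j \<noteq> k \<Longrightarrow> inS u n k (u j * y)"
  unfolding inS_def
  by (intro exI[of _ "\<lambda>i. if i = j then y else 0"]) (simp add: sum.delta' if_distrib[of "\<lambda>x. u _ * x"] cong: if_cong)

lemma inS_sum: "(\<And>i. i \<in> A \<Longrightarrow> inS u n k (F i)) \<Longrightarrow> inS u n k (sum F A)"
proof (induction A rule: infinite_finite_induct)
  case (infinite A) then show ?case by (simp add: inS_zero)
next
  case empty then show ?case by (simp add: inS_zero)
next
  case (insert x F) then show ?case by (simp add: inS_add)
qed

lemma sum_split_k:
  fixes F :: "nat \<Rightarrow> 'a::ring_1"
  assumes "k < n"
  shows "(\<Sum>j<n. F j) = F k + (\<Sum>j<n. if j = k then 0 else F j)"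
proof -
  have "(\<Sum>j<n. F j) = (\<Sum>j<n. (if j = k then F j else 0) + (if j = k then 0 else F j))"
    by (rule sum.cong) auto
  also have "\<dots> = F k + (\<Sum>j<n. if j = k then 0 else F j)"
    using assms by (simp add: sum.distrib sum.delta)
  finally show ?thesis .
qed

lemma stage1_aux:
  fixes A :: "'a::ring_1 mat"
  assumes ex: "exchange_ring TYPE('a)" and inv: "inv_n n A" and n: "0 < n"
  shows "k \<le> n \<Longrightarrow> \<exists>B f g. reach n A B \<and> inv_n n B \<and> g * g = g \<and>
     (\<forall>i<k. f i * f i = f i) \<and> (\<forall>i<k. \<forall>j<k. i \<noteq> j \<longrightarrow> f i * f j = 0) \<and>
     (\<forall>i<k. f i * g = 0 \<and> g * f i = 0) \<and> (\<Sum>i<k. f i) + g = 1 \<and>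
     (\<forall>i<k. f i * B $$ (0, i) = B $$ (0, i)) \<and> (\<forall>i<k. \<exists>r. f i = B $$ (0, i) * r)"
proof (induction k)
  case 0
  show ?case by (rule exI[of _ A], rule exI[of _ "\<lambda>_. 0"], rule exI[of _ 1]) (use inv in auto)
next
  case (Suc k)
  then have kn: "k < n" by simp
  from Suc obtain B f g where r: "reach n A B" and iB: "inv_n n B" and gg: "g * g = g"
    and fi: "\<forall>i<k. f i * f i = f i" and fij: "\<forall>i<k. \<forall>j<k. i \<noteq> j \<longrightarrow> f i * f j = 0"
    and fg: "\<forall>i<k. f i * g = 0 \<and> g * f i = 0" and sm: "(\<Sum>i<k. f i) + g = 1"
    and fB: "\<forall>i<k. f i * B $$ (0, i) = B $$ (0, i)" and fr: "\<forall>i<k. \<exists>r. f i = B $$ (0, i) * r"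
    by auto
  from iB obtain X where Bc: "B \<in> carrier_mat n n" and Xc: "X \<in> carrier_mat n n"
    and BX: "B * X = 1\<^sub>m n" unfolding inv_n_def by blast
  define u where "u = (\<lambda>j. B $$ (0, j))"
  define x where "x = (\<lambda>j. X $$ (j, 0))"
  have ux: "(\<Sum>j<n. u j * x j) = 1"
    using mult_entry[OF Bc Xc n n] BX n unfolding u_def x_def by simp
  define w where "w = (\<Sum>j<n. if j = k then 0 else u j * x j)"
  have aw: "u k * x k + w = 1" using ux sum_split_k[OF kn, of "\<lambda>j. u j * x j"] unfolding w_def by simp
  obtain fk g' where fkfk: "fk * fk = fk" and g'g': "g' * g' = g'" and fkg': "fk * g' = 0"
    and g'fk: "g' * fk = 0" and sum: "fk + g' = g" and gfk: "g * fk = fk" and fkg: "fk * g = fk"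
    and gg': "g * g' = g'" and g'g: "g' * g = g'" and t1: "\<exists>t. fk = g * (u k * x k) * t"
    and t2: "\<exists>t. g' = g * w * t"
    using split_step[OF ex gg aw] by blast
  have S1: "inS u n k (1 - g)"
  proof -
    have "1 - g = (\<Sum>i<k. f i)" using sm by (simp add: algebra_simps)
    also have "inS u n k \<dots>"
    proof (rule inS_sum)
      fix i assume i: "i \<in> {..<k}"
      then obtain ri where "f i = B $$ (0, i) * ri" using fr by auto
      then have "f i = u i * ri" unfolding u_def by simp
      then show "inS u n k (f i)" using i kn inS_gen[of i n k u ri] by simp
    qed
    finally show ?thesis .
  qed
  have Sw: "inS u n k w" unfolding w_def
  proof (rule inS_sum)
    fix j assume j: "j \<in> {..<n}"
    show "inS u n k (if j = k then 0 else u j * x j)"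
      using j by (auto simp: inS_zero inS_gen)
  qed
  have Sgw: "inS u n k (g * w)"
  proof -
    have "g * w = w - (1 - g) * w" by (simp add: algebra_simps)
    then show ?thesis using inS_diff[OF Sw inS_rmult[OF S1, of w]] by simp
  qed
  have Sg': "inS u n k g'" using t2 inS_rmult[OF Sgw] by auto
  have S: "inS u n k (1 - fk)"
  proof -
    have e: "1 - fk = (1 - g) + g'" using sum by (simp add: algebra_simps)
    show ?thesis unfolding e by (rule inS_add[OF S1 Sg'])
  qed
  then have "inS u n k ((1 - fk) * (- u k))" by (rule inS_rmult)
  then obtain c where ck: "c k = 0" and cs: "(1 - fk) * (- u k) = (\<Sum>j<n. u j * c j)"
    unfolding inS_def by blast
  obtain B' where r': "reach n B B'" and iB': "inv_n n B'"
    and B': "\<forall>r<n. \<forall>l<n. B' $$ (r, l) = (if l = k then B $$ (r, k) + (\<Sum>j<n. B $$ (r, j) * c j) else B $$ (r, l))"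
    using addcols_into[of n B k c] iB kn ck by blast
  have B'k: "B' $$ (0, k) = fk * u k"
  proof -
    have "B' $$ (0, k) = u k + (1 - fk) * (- u k)" using B' n kn cs unfolding u_def by simp
    also have "\<dots> = fk * u k" by (simp add: algebra_simps)
    finally show ?thesis .
  qed
  have B'i: "\<And>i. i < n \<Longrightarrow> i \<noteq> k \<Longrightarrow> B' $$ (0, i) = B $$ (0, i)" using B' n by auto
  define f' where "f' = f(k := fk)"
  have fgi: "\<And>i. i < k \<Longrightarrow> f i * g = 0" "\<And>i. i < k \<Longrightarrow> g * f i = 0" using fg by auto
  have P1: "reach n A B'" using r r' by simp
  have P2: "\<forall>i<Suc k. f' i * f' i = f' i" using fi fkfk unfolding f'_def by (auto simp: less_Suc_eq)
  have a1: "f i * fk = 0" if "i < k" for i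
  proof -
    have "f i * fk = f i * g * fk" using gfk by (simp add: mult.assoc)
    then show ?thesis using fgi(1)[OF that] by simp
  qed
  have b1: "fk * f i = 0" if "i < k" for i
  proof -
    have "fk * f i = fk * (g * f i)" using fkg by (metis mult.assoc)
    then show ?thesis using fgi(2)[OF that] by simp
  qed
  have P3: "\<forall>i<Suc k. \<forall>j<Suc k. i \<noteq> j \<longrightarrow> f' i * f' j = 0"
    using fij a1 b1 unfolding f'_def by (auto simp: less_Suc_eq)
  have a2: "f i * g' = 0" if "i < k" for i
  proof -
    have "f i * g' = f i * g * g'" using gg' by (simp add: mult.assoc)
    then show ?thesis using fgi(1)[OF that] by simp
  qed
  have b2: "g' * f i = 0" if "i < k" for i
  proof -
    have "g' * f i = g' * (g * f i)" using g'g by (metis mult.assoc)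
    then show ?thesis using fgi(2)[OF that] by simp
  qed
  have P4: "\<forall>i<Suc k. f' i * g' = 0 \<and> g' * f' i = 0"
    using a2 b2 fkg' g'fk unfolding f'_def by (auto simp: less_Suc_eq)
  have P5: "(\<Sum>i<Suc k. f' i) + g' = 1"
  proof -
    have "(\<Sum>i<Suc k. f' i) = (\<Sum>i<k. f i) + fk" unfolding f'_def by simp
    then show ?thesis using sm sum by (simp add: add.assoc)
  qed
  have P6: "\<forall>i<Suc k. f' i * B' $$ (0, i) = B' $$ (0, i)"
  proof (intro allI impI)
    fix i assume i: "i < Suc k"
    show "f' i * B' $$ (0, i) = B' $$ (0, i)"
    proof (cases "i = k")
      case True
      then show ?thesis using B'k fkfk unfolding f'_def by (simp add: mult.assoc[symmetric])
    next
      case False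
      then have "i < k" using i by simp
      then show ?thesis using fB B'i[of i] kn False unfolding f'_def by simp
    qed
  qed
  have P7: "\<forall>i<Suc k. \<exists>r. f' i = B' $$ (0, i) * r"
  proof (intro allI impI)
    fix i assume i: "i < Suc k"
    show "\<exists>r. f' i = B' $$ (0, i) * r"
    proof (cases "i = k")
      case True
      obtain t where t: "fk = g * (u k * x k) * t" using t1 by blast
      have "fk = fk * fk" using fkfk by simp
      also have "\<dots> = (fk * g) * (u k * x k) * t" by (subst (2) t) (simp add: mult.assoc)
      also have "\<dots> = B' $$ (0, k) * (x k * t)" using fkg B'k by (simp add: mult.assoc)
      finally show ?thesis using True unfolding f'_def by auto
    next
      case False
      then have "i < k" using i by simp
      then show ?thesis using fr B'i[of i] kn False unfolding f'_def by simp
    qed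
  qed
  show ?case using P1 iB' g'g' P2 P3 P4 P5 P6 P7 by blast
qed

lemma stage1:
  fixes A :: "'a::ring_1 mat"
  assumes ex: "exchange_ring TYPE('a)" and inv: "inv_n n A" and n: "0 < n"
  shows "\<exists>B f. reach n A B \<and> inv_n n B \<and>
     (\<forall>i<n. f i * f i = f i) \<and> (\<forall>i<n. \<forall>j<n. i \<noteq> j \<longrightarrow> f i * f j = 0) \<and>
     (\<Sum>i<n. f i) = 1 \<and> (\<forall>i<n. f i * B $$ (0, i) = B $$ (0, i))"
proof -
  obtain B f g where r: "reach n A B" and iB: "inv_n n B" and gg: "g * g = g"
    and fi: "\<forall>i<n. f i * f i = f i" and fij: "\<forall>i<n. \<forall>j<n. i \<noteq> j \<longrightarrow> f i * f j = 0"
    and fg: "\<forall>i<n. f i * g = 0 \<and> g * f i = 0" and sm: "(\<Sum>i<n. f i) + g = 1"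
    and fB: "\<forall>i<n. f i * B $$ (0, i) = B $$ (0, i)"
    using stage1_aux[OF ex inv n, of n] by blast
  from iB obtain X where Bc: "B \<in> carrier_mat n n" and Xc: "X \<in> carrier_mat n n"
    and BX: "B * X = 1\<^sub>m n" unfolding inv_n_def by blast
  have ux: "(\<Sum>j<n. B $$ (0, j) * X $$ (j, 0)) = 1"
    using mult_entry[OF Bc Xc n n] BX n by simp
  have "g = g * (\<Sum>j<n. B $$ (0, j) * X $$ (j, 0))" using ux by simp
  also have "\<dots> = (\<Sum>j<n. (g * f j) * B $$ (0, j) * X $$ (j, 0))"
    unfolding sum_distrib_left using fB by (intro sum.cong) (auto simp: mult.assoc)
  also have "\<dots> = 0" using fg by simp
  finally have "g = 0" .
  then have "(\<Sum>i<n. f i) = 1" using sm by simp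
  then show ?thesis using r iB fi fij fB by blast
qed

primrec gprod :: "(nat \<Rightarrow> 'a::ring_1) \<Rightarrow> nat \<Rightarrow> 'a" where
  "gprod g 0 = 1"
| "gprod g (Suc k) = gprod g k * g (Suc k)"

lemma gprod_first: "1 \<le> k \<Longrightarrow> \<exists>t. gprod g k = g 1 * t"
proof (induction k)
  case 0 then show ?case by simp
next
  case (Suc k)
  show ?case
  proof (cases "k = 0")
    case True then show ?thesis by (intro exI[of _ 1]) simp
  next
    case False
    then obtain t where "gprod g k = g 1 * t" using Suc by auto
    then show ?thesis by (intro exI[of _ "t * g (Suc k)"]) (simp add: mult.assoc)
  qed
qed

lemma telescope:
  "1 \<le> m \<Longrightarrow> (\<Sum>j<m. if j = 0 then 0 else gprod g (j - 1) * (1 - g j)) = 1 - gprod g (m - 1)"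
proof (induction m)
  case 0 then show ?case by simp
next
  case (Suc m)
  show ?case
  proof (cases "m = 0")
    case True then show ?thesis by simp
  next
    case False
    then obtain m' where m: "m = Suc m'" by (cases m) auto
    have "(\<Sum>j<Suc m. if j = 0 then 0 else gprod g (j - 1) * (1 - g j))
        = (1 - gprod g m') + gprod g m' * (1 - g m)"
      using Suc False m by simp
    also have "\<dots> = 1 - gprod g m" using m by (simp add: algebra_simps)
    finally show ?thesis by simp
  qed
qed

lemma final_alg:
  fixes u a1 f :: "nat \<Rightarrow> 'a::ring_1" and X :: "nat \<Rightarrow> nat \<Rightarrow> 'a" and n :: nat
  assumes n: "2 \<le> n"
    and fi: "\<forall>i<n. f i * f i = f i" and fij: "\<forall>i<n. \<forall>j<n. i \<noteq> j \<longrightarrow> f i * f j = 0"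
    and fsum: "(\<Sum>i<n. f i) = 1" and fu: "\<forall>i<n. f i * u i = u i"
    and uX: "\<forall>l<n. (\<Sum>j<n. u j * X j l) = (if l = 0 then 1 else 0)"
    and aX: "(\<Sum>k<n. a1 k * X k 1) = 1"
    and gdef: "g = (\<lambda>j. X j 0 * u j)"
    and ddef: "d = u 0 * gprod g (n - 1)"
    and e2: "e2 * e2 = e2" and e2d: "e2 = d * s2"
  shows "regular_elem (e2 * d) \<and> (1 - e2) * (1 - e2) = 1 - e2
     \<and> (1 - s2 * (e2 * d)) * (1 - s2 * (e2 * d)) = 1 - s2 * (e2 * d)
     \<and> range (\<lambda>r. (e2 * d) * r) = range (\<lambda>r. (1 - (1 - e2)) * r)
     \<and> range (\<lambda>r. r * (e2 * d)) = range (\<lambda>r. r * (1 - (1 - s2 * (e2 * d))))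
     \<and> two_sided_ideal (1 - e2) = UNIV \<and> two_sided_ideal (1 - s2 * (e2 * d)) = UNIV"
proof -
  define D where "D = e2 * d"
  define p where "p = 1 - e2"
  define q where "q = 1 - s2 * D"
  have n0: "0 < n" and n1: "1 < n" using n by auto
  have D1: "u i * X i l = (if l = 0 then f i else 0)" if i: "i < n" and l: "l < n" for i l
  proof -
    have "f i * (\<Sum>j<n. u j * X j l) = (\<Sum>j<n. f i * u j * X j l)"
      by (simp add: sum_distrib_left mult.assoc)
    also have "\<dots> = (\<Sum>j<n. if j = i then u i * X i l else 0)"
    proof (rule sum.cong)
      fix j assume j: "j \<in> {..<n}"
      show "f i * u j * X j l = (if j = i then u i * X i l else 0)"
      proof (cases "j = i")
        case True then show ?thesis using fu i by simp
      next
        case False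
        have "f i * u j = f i * f j * u j" using fu j by (simp add: mult.assoc)
        then show ?thesis using fij i j False by simp
      qed
    qed simp
    also have "\<dots> = u i * X i l" using i by (simp add: sum.delta)
    finally have "f i * (if l = 0 then 1 else 0) = u i * X i l" using uX l by simp
    then show ?thesis by (cases "l = 0") simp_all
  qed
  have gg: "g j * g j = g j" if "j < n" "1 \<le> j" for j
  proof -
    have "g j * g j = X j 0 * (u j * X j 0) * u j" unfolding gdef by (simp add: mult.assoc)
    also have "\<dots> = X j 0 * (f j * u j)" using D1[OF that(1) n0] by (simp add: mult.assoc)
    also have "\<dots> = g j" using fu that unfolding gdef by simp
    finally show ?thesis .
  qed
  have ug: "u j * (1 - g j) = 0" if "j < n" for j
  proof -
    have "u j * g j = (u j * X j 0) * u j" unfolding gdef by (simp add: mult.assoc)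
    also have "\<dots> = u j" using D1[OF that n0] fu that by simp
    finally show ?thesis by (simp add: algebra_simps)
  qed
  define G where "G = gprod g (n - 1)"
  have dG: "d = u 0 * G" unfolding ddef G_def ..
  have Ds2: "D * s2 = e2" unfolding D_def using e2 e2d by (simp add: mult.assoc[symmetric])
  have DsD: "D * s2 * D = D" using Ds2 e2 unfolding D_def by (simp add: mult.assoc[symmetric])
  have reg: "regular_elem D" unfolding regular_elem_def using DsD by blast
  have pp: "p * p = p" unfolding p_def using e2 by (simp add: algebra_simps)
  have sDsD: "(s2 * D) * (s2 * D) = s2 * D" using DsD by (simp add: mult.assoc)
  have qq: "q * q = q" unfolding q_def using sDsD by (simp add: algebra_simps)
  have r1: "range (\<lambda>r. D * r) = range (\<lambda>r. (1 - p) * r)"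
  proof -
    have "D * r = (1 - p) * (d * r)" for r unfolding D_def p_def by (simp add: mult.assoc)
    moreover have "(1 - p) * r = D * (s2 * r)" for r unfolding p_def using Ds2 by (simp add: mult.assoc[symmetric])
    ultimately show ?thesis by (auto simp: image_def; metis)
  qed
  have r2: "range (\<lambda>r. r * D) = range (\<lambda>r. r * (1 - q))"
  proof -
    have "r * D = (r * D) * (1 - q)" for r unfolding q_def using DsD by (simp add: mult.assoc)
    moreover have "r * (1 - q) = (r * s2) * D" for r unfolding q_def by (simp add: mult.assoc)
    ultimately show ?thesis by (auto simp: image_def; metis)
  qed
  have pfull: "two_sided_ideal p = UNIV"
  proof -
    have I: "is_ideal (two_sided_ideal p)" by (rule tsi_ideal)
    have u0: "(1 - f 0) * u 0 = 0" using fu n0 by (simp add: algebra_simps)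
    have "(1 - f 0) * e2 = 0" unfolding e2d dG using u0 by (simp add: mult.assoc[symmetric])
    then have "1 - f 0 = (1 - f 0) * p" unfolding p_def by (simp add: algebra_simps)
    then have f0p: "1 - f 0 \<in> two_sided_ideal p"
      using ideal_lmult[OF I tsi_self[of p], of "1 - f 0"] by simp
    have "1 \<le> n - 1" using n by simp
    then obtain t where t: "G = g 1 * t" using gprod_first[of "n - 1" g] unfolding G_def by blast
    have f10: "(1 - f 0) * f 1 = f 1" using fij n1 n0 by (simp add: algebra_simps)
    have fu1: "f 1 * u 1 = u 1" using fu n1 by simp
    have u1: "u 1 = (1 - f 0) * (f 1 * u 1)"
    proof -
      have "(1 - f 0) * (f 1 * u 1) = ((1 - f 0) * f 1) * u 1" by (simp add: mult.assoc)
      also have "\<dots> = u 1" using f10 fu1 by simp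
      finally show ?thesis by simp
    qed
    have "e2 = u 0 * X 1 0 * u 1 * t * s2"
      unfolding e2d dG t gdef by (simp add: mult.assoc)
    also have "\<dots> = u 0 * X 1 0 * (1 - f 0) * (f 1 * u 1 * t * s2)"
      by (subst u1) (simp add: mult.assoc)
    finally have "e2 = u 0 * X 1 0 * (1 - f 0) * (f 1 * u 1 * t * s2)" .
    then have "e2 \<in> two_sided_ideal p"
      using ideal_rmult[OF I ideal_lmult[OF I f0p]] by simp
    then have "p + e2 \<in> two_sided_ideal p" using ideal_add[OF I tsi_self] by blast
    then have "1 \<in> two_sided_ideal p" unfolding p_def by simp
    then show ?thesis by (rule ideal_UNIV[OF I])
  qed
  have qfull: "two_sided_ideal q = UNIV"
  proof -
    define C where "C = two_sided_ideal q"
    have I: "is_ideal C" unfolding C_def by (rule tsi_ideal)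
    have qC: "q \<in> C" unfolding C_def by (rule tsi_self)
    have clos: "v \<in> C" if "d * v \<in> C" for v
    proof -
      have "v = q * v + s2 * e2 * (d * v)" unfolding q_def D_def by (simp add: algebra_simps)
      moreover have "q * v \<in> C" using ideal_rmult[OF I qC] .
      moreover have "s2 * e2 * (d * v) \<in> C" using ideal_lmult[OF I that] .
      ultimately show ?thesis using ideal_add[OF I] by metis
    qed
    have stp: "1 - g (Suc k) \<in> C \<and> G - gprod g k \<in> C"
      if k: "Suc k \<le> n - 1" and P: "G - gprod g (Suc k) \<in> C" for k
    proof -
      have gk: "g (Suc k) * g (Suc k) = g (Suc k)" using gg[of "Suc k"] k by simp
      have z: "gprod g (Suc k) * (1 - g (Suc k)) = 0" using gk by (simp add: algebra_simps mult.assoc)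
      have "d * (1 - g (Suc k)) = u 0 * (G - gprod g (Suc k)) * (1 - g (Suc k)) + u 0 * (gprod g (Suc k) * (1 - g (Suc k)))"
        unfolding dG by (simp add: algebra_simps)
      also have "\<dots> = u 0 * (G - gprod g (Suc k)) * (1 - g (Suc k))" using z by simp
      finally have "d * (1 - g (Suc k)) \<in> C"
        using ideal_rmult[OF I ideal_lmult[OF I P]] by simp
      then have a: "1 - g (Suc k) \<in> C" by (rule clos)
      have "G - gprod g k = (G - gprod g (Suc k)) + gprod g k * (g (Suc k) - 1)"
        by (simp add: algebra_simps)
      moreover have "gprod g k * (g (Suc k) - 1) \<in> C"
        using ideal_lmult[OF I ideal_neg[OF I a]] by simp
      ultimately have "G - gprod g k \<in> C" using ideal_add[OF I P] by metis
      then show ?thesis using a by blast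
    qed
    have Pall: "G - gprod g k \<in> C" if "k \<le> n - 1" for k
      using that
    proof (induction k rule: inc_induct)
      case base then show ?case unfolding G_def using ideal_zero[OF I] by simp
    next
      case (step k) then show ?case using stp[of k] by simp
    qed
    have G1: "G - 1 \<in> C" using Pall[of 0] by simp
    have gC: "1 - g j \<in> C" if "1 \<le> j" "j \<le> n - 1" for j
    proof -
      from that(1) obtain k where j: "j = Suc k" by (cases j) auto
      show ?thesis using stp[of k] Pall[of j] that j by simp
    qed
    have Y: "X 0 l \<in> C" if "1 \<le> l" "l < n" for l
    proof -
      have u0X: "u 0 * X 0 l = 0" using D1[OF n0 that(2)] that by simp
      have "d * X 0 l = u 0 * (G - 1) * X 0 l + u 0 * X 0 l" unfolding dG by (simp add: algebra_simps)
      then have "d * X 0 l = u 0 * (G - 1) * X 0 l" using u0X by simp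
      then have "d * X 0 l \<in> C" using ideal_rmult[OF I ideal_lmult[OF I G1]] by simp
      then show ?thesis by (rule clos)
    qed
    have W: "X k l \<in> C" if "1 \<le> k" "k < n" "1 \<le> l" "l < n" for k l
    proof -
      have ukX: "u k * X k l = 0" using D1[OF that(2) that(4)] that by simp
      have "X k l = (1 - g k) * X k l + X k 0 * (u k * X k l)" unfolding gdef by (simp add: algebra_simps mult.assoc)
      then have "X k l = (1 - g k) * X k l" using ukX by simp
      moreover have "(1 - g k) * X k l \<in> C" using ideal_rmult[OF I gC] that by simp
      ultimately show ?thesis by simp
    qed
    have "(\<Sum>k<n. a1 k * X k 1) \<in> C"
    proof (rule ideal_sum[OF I])
      fix k assume k: "k \<in> {..<n}"
      have "X k 1 \<in> C"
      proof (cases "k = 0")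
        case True then show ?thesis using Y[of 1] n1 by simp
      next
        case False then show ?thesis using W[of k 1] n1 k by simp
      qed
      then show "a1 k * X k 1 \<in> C" by (rule ideal_lmult[OF I])
    qed
    then have "1 \<in> C" using aX by simp
    then show ?thesis using ideal_UNIV[OF I] unfolding C_def by blast
  qed
  show ?thesis using reg pp qq r1 r2 pfull qfull unfolding D_def p_def q_def by simp
qed

theorem lemma2p7:
  fixes A :: "'a::ring_1 mat" and n :: nat
  assumes "exchange_ring TYPE('a)"
    and "n \<ge> 2"
    and "A \<in> carrier_mat n n"
    and "invertible_mat A"
  shows "\<exists>B d p q. (elem_step n)\<^sup>*\<^sup>* A B \<and> d = B $$ (0,0) \<and> regular_elem d \<and>
           p * p = p \<and> q * q = q \<and>
           range (\<lambda>r. d * r) = range (\<lambda>r. (1 - p) * r) \<and>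
           range (\<lambda>r. r * d) = range (\<lambda>r. r * (1 - q)) \<and>
           two_sided_ideal p = UNIV \<and> two_sided_ideal q = UNIV"
proof -
  note ex = assms(1)
  have n: "2 \<le> n" by (rule assms(2))
  have n0: "0 < n" and n1: "1 < n" using n by auto
  have invA: "inv_n n A" by (rule invertible_inv_n[OF assms(3,4)])
  obtain A1 f where r1: "reach n A A1" and i1: "inv_n n A1"
    and fi: "\<forall>i<n. f i * f i = f i" and fij: "\<forall>i<n. \<forall>j<n. i \<noteq> j \<longrightarrow> f i * f j = 0"
    and fsum: "(\<Sum>i<n. f i) = 1" and fu: "\<forall>i<n. f i * A1 $$ (0, i) = A1 $$ (0, i)"
    using stage1[OF ex invA n0] by blast
  from i1 obtain X1 where A1c: "A1 \<in> carrier_mat n n" and X1c: "X1 \<in> carrier_mat n n"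
    and A1X1: "A1 * X1 = 1\<^sub>m n" unfolding inv_n_def by blast
  define u where "u = (\<lambda>j. A1 $$ (0, j))"
  define X where "X = (\<lambda>j l. X1 $$ (j, l))"
  define a1 where "a1 = (\<lambda>k. A1 $$ (1, k))"
  define g where "g = (\<lambda>j. X j 0 * u j)"
  define d where "d = u 0 * gprod g (n - 1)"
  have uX: "\<forall>l<n. (\<Sum>j<n. u j * X j l) = (if l = 0 then 1 else 0)"
  proof (intro allI impI)
    fix l assume l: "l < n"
    have "(A1 * X1) $$ (0, l) = (\<Sum>j<n. u j * X j l)"
      using mult_entry[OF A1c X1c n0 l] unfolding u_def X_def .
    then show "(\<Sum>j<n. u j * X j l) = (if l = 0 then 1 else 0)" using A1X1 l n0 by simp
  qed
  have aX: "(\<Sum>k<n. a1 k * X k 1) = 1"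
  proof -
    have "(A1 * X1) $$ (1, 1) = (\<Sum>k<n. a1 k * X k 1)"
      using mult_entry[OF A1c X1c n1 n1] unfolding a1_def X_def .
    then show ?thesis using A1X1 n1 by simp
  qed
  have fu': "\<forall>i<n. f i * u i = u i" using fu unfolding u_def by simp
  have ug: "u j * (1 - g j) = 0" if "j < n" for j
  proof -
    have D1: "u j * X j 0 = f j"
    proof -
      have "f j * (\<Sum>i<n. u i * X i 0) = (\<Sum>i<n. if i = j then u j * X j 0 else 0)"
        unfolding sum_distrib_left
      proof (rule sum.cong)
        fix i assume i: "i \<in> {..<n}"
        show "f j * (u i * X i 0) = (if i = j then u j * X j 0 else 0)"
        proof (cases "i = j")
          case True then show ?thesis using fu' that by (simp add: mult.assoc[symmetric])
        next
          case False
          have "f j * (u i * X i 0) = (f j * f i) * u i * X i 0" using fu' i by (simp add: mult.assoc)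
          then show ?thesis using fij that i False by simp
        qed
      qed simp
      then show ?thesis using uX n0 that by (simp add: sum.delta)
    qed
    have "u j * g j = (u j * X j 0) * u j" unfolding g_def by (simp add: mult.assoc)
    also have "\<dots> = u j" using D1 fu' that by simp
    finally show ?thesis by (simp add: algebra_simps)
  qed
  obtain A2a where r2a: "reach n A1 A2a" and i2a: "inv_n n A2a"
    and A2a: "\<forall>r<n. \<forall>l<n. A2a $$ (r, l) = (if l \<noteq> 0 then A1 $$ (r, l) + A1 $$ (r, 0) * (- gprod g (l - 1)) else A1 $$ (r, l))"
    using addcol_from[of n A1 0 "\<lambda>l. - gprod g (l - 1)"] i1 n0 by blast
  define c where "c = (\<lambda>j. if j = 0 then 0 else 1 - g j)"
  obtain A2 where r2: "reach n A2a A2" and i2: "inv_n n A2"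
    and A2: "\<forall>r<n. \<forall>l<n. A2 $$ (r, l) = (if l = 0 then A2a $$ (r, 0) + (\<Sum>j<n. A2a $$ (r, j) * c j) else A2a $$ (r, l))"
    using addcols_into[of n A2a 0 c] i2a n0 unfolding c_def by auto
  have A2d: "A2 $$ (0, 0) = d"
  proof -
    have "A2 $$ (0, 0) = u 0 + (\<Sum>j<n. A2a $$ (0, j) * c j)"
      using A2 A2a n0 unfolding u_def by simp
    also have "(\<Sum>j<n. A2a $$ (0, j) * c j)
        = (\<Sum>j<n. (if j = 0 then 0 else u j * (1 - g j)) - u 0 * (if j = 0 then 0 else gprod g (j - 1) * (1 - g j)))"
      by (rule sum.cong) (use A2a in \<open>auto simp: c_def u_def algebra_simps\<close>)
    also have "\<dots> = - (u 0 * (1 - gprod g (n - 1)))"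
    proof -
      have "(\<Sum>j<n. if j = 0 then 0 else u j * (1 - g j)) = 0"
        using ug by (intro sum.neutral) auto
      moreover have "(\<Sum>j<n. u 0 * (if j = 0 then 0 else gprod g (j - 1) * (1 - g j)))
          = u 0 * (1 - gprod g (n - 1))"
        unfolding sum_distrib_left[symmetric] using telescope[of n g] n0 by simp
      ultimately show ?thesis by (simp add: sum_subtractf)
    qed
    finally show ?thesis unfolding d_def by (simp add: algebra_simps)
  qed
  from i2 obtain X2 where A2c: "A2 \<in> carrier_mat n n" and X2c: "X2 \<in> carrier_mat n n"
    and A2X2: "A2 * X2 = 1\<^sub>m n" unfolding inv_n_def by blast
  obtain e2 r s where e2: "e2 * e2 = e2" and e2r: "e2 = (d * X2 $$ (0, 0)) * r"
    and e2s: "1 - e2 = (1 - d * X2 $$ (0, 0)) * s"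
    using exch[OF ex, of "d * X2 $$ (0, 0)"] by blast
  have row: "(\<Sum>j<n. A2 $$ (0, j) * X2 $$ (j, 0)) = 1"
    using mult_entry[OF A2c X2c n0 n0] A2X2 n0 by simp
  have oms: "1 - d * X2 $$ (0, 0) = (\<Sum>j<n. if j = 0 then 0 else A2 $$ (0, j) * X2 $$ (j, 0))"
    using sum_split_k[OF n0, of "\<lambda>j. A2 $$ (0, j) * X2 $$ (j, 0)"] row A2d by (simp add: algebra_simps)
  define c3 where "c3 = (\<lambda>j. if j = 0 then 0 else X2 $$ (j, 0) * s * (- d))"
  obtain A3 where r3: "reach n A2 A3" and i3: "inv_n n A3"
    and A3: "\<forall>r<n. \<forall>l<n. A3 $$ (r, l) = (if l = 0 then A2 $$ (r, 0) + (\<Sum>j<n. A2 $$ (r, j) * c3 j) else A2 $$ (r, l))"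
    using addcols_into[of n A2 0 c3] i2 n0 unfolding c3_def by auto
  have A3d: "A3 $$ (0, 0) = e2 * d"
  proof -
    have "(\<Sum>j<n. A2 $$ (0, j) * c3 j) = (\<Sum>j<n. (if j = 0 then 0 else A2 $$ (0, j) * X2 $$ (j, 0)) * (s * (- d)))"
      by (rule sum.cong) (auto simp: c3_def mult.assoc)
    also have "\<dots> = (1 - e2) * (- d)" unfolding sum_distrib_right[symmetric] oms[symmetric] e2s
      by (simp add: mult.assoc)
    finally have "(\<Sum>j<n. A2 $$ (0, j) * c3 j) = (1 - e2) * (- d)" .
    then show ?thesis using A3 n0 A2d by (simp add: algebra_simps)
  qed
  define s2 where "s2 = X2 $$ (0, 0) * r"
  have e2d: "e2 = d * s2" unfolding s2_def e2r by (simp add: mult.assoc)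
  note fin = final_alg[OF n fi fij fsum fu' uX aX g_def d_def e2 e2d]
  have reach: "reach n A A3" using r1 r2a r2 r3 by (meson rtranclp_trans)
  show ?thesis
    apply (rule exI[of _ A3], rule exI[of _ "A3 $$ (0, 0)"], rule exI[of _ "1 - e2"],
           rule exI[of _ "1 - s2 * (e2 * d)"])
    using fin reach A3d by simp
qed

end
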